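(* Let $n\ge 2$ and let $\Omega\subset\mathbb{R}^n$ be a smooth bounded strictly convex domain, and let $d$ be the radius of the largest ball inscribed in $\Omega$. Let $u$ be the solution of either \[ \mathrm{div}\Big(\frac{\nabla u}{\sqrt{1+|\nabla u|^2}}\Big)=\frac{1}{(1+|\nabla u|^2)^{3/2}}\ \text{in }\Omega,\qquad u=0\ \text{on }\partial\Omega, \] or \[ \mathrm{div}\Big(\frac{\nabla u}{\sqrt{1-|\nabla u|^2}}\Big)=\frac{1}{(1-|\nabla u|^2)^{3/2}},\quad |\nabla u|<1\ \text{in }\Omega,\qquad u=0\ \text{on }\partial\Omega. \] Then, with $u_{\min}=\min_{\overline\Omega}u$, \[ -u_{\min}\le\frac{d^2}{2}. \] *)

theory Defs
  imports "HOL-Analysis.Analysis"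
begin

definition pd :: "(real^'n \<Rightarrow> real) \<Rightarrow> 'n \<Rightarrow> real^'n \<Rightarrow> real" where
  "pd f i x = frechet_derivative f (at x) (axis i 1)"

definition grad :: "(real^'n \<Rightarrow> real) \<Rightarrow> real^'n \<Rightarrow> real^'n" where
  "grad f x = (\<chi> i. pd f i x)"

definition divg :: "(real^'n \<Rightarrow> real^'n) \<Rightarrow> real^'n \<Rightarrow> real" where
  "divg F x = (\<Sum>i\<in>UNIV. pd (\<lambda>y. F y $ i) i x)"

fun iter_pd :: "'n list \<Rightarrow> (real^'n \<Rightarrow> real) \<Rightarrow> real^'n \<Rightarrow> real" where
  "iter_pd [] f = f"
| "iter_pd (i # is) f = pd (iter_pd is f) i"

definition smooth_on :: "(real^'n) set \<Rightarrow> (real^'n \<Rightarrow> real) \<Rightarrow> bool" where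
  "smooth_on S f \<longleftrightarrow> (\<forall>is. \<forall>x\<in>S. iter_pd is f differentiable (at x))"

definition C2_on :: "(real^'n) set \<Rightarrow> (real^'n \<Rightarrow> real) \<Rightarrow> bool" where
  "C2_on S u \<longleftrightarrow> (\<forall>x\<in>S. u differentiable (at x)) \<and>
     (\<forall>i. \<forall>x\<in>S. pd u i differentiable (at x)) \<and>
     (\<forall>i j. continuous_on S (pd (pd u i) j))"

definition smooth_boundary :: "(real^'n) set \<Rightarrow> bool" where
  "smooth_boundary \<Omega> \<longleftrightarrow> (\<forall>p\<in>frontier \<Omega>. \<exists>U \<rho>. open U \<and> p \<in> U \<and> smooth_on U \<rho> \<and>
      (\<forall>x\<in>U. grad \<rho> x \<noteq> 0) \<and> \<Omega> \<inter> U = {x\<in>U. \<rho> x < 0})"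

definition strictly_convex_domain :: "(real^'n) set \<Rightarrow> bool" where
  "strictly_convex_domain \<Omega> \<longleftrightarrow> convex \<Omega> \<and>
     (\<forall>x\<in>closure \<Omega>. \<forall>y\<in>closure \<Omega>. x \<noteq> y \<longrightarrow> open_segment x y \<subseteq> \<Omega>)"

definition inradius :: "(real^'n) set \<Rightarrow> real" where
  "inradius \<Omega> = Sup {r. r > 0 \<and> (\<exists>x. ball x r \<subseteq> \<Omega>)}"

end

theory Submission
  imports Defs
begin


lemma lin_expand:
  fixes L :: "real^'n \<Rightarrow> real"
  assumes "linear L"
  shows "L v = (\<Sum>i\<in>UNIV. v$i * L (axis i 1))"
proof -
  have "L v = L (\<Sum>i\<in>UNIV. v$i *s axis i 1)" by (simp add: basis_expansion)
  also have "\<dots> = (\<Sum>i\<in>UNIV. v$i * L (axis i 1))"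
    using assms by (simp add: linear_sum linear_scale scalar_mult_eq_scaleR)
  finally show ?thesis .
qed

lemma pd_deriv:
  fixes f :: "real^'n \<Rightarrow> real"
  assumes "f differentiable (at x)"
  shows "(f has_derivative (\<lambda>h. \<Sum>i\<in>UNIV. h$i * pd f i x)) (at x)"
proof -
  have d: "(f has_derivative frechet_derivative f (at x)) (at x)"
    using assms frechet_derivative_works by blast
  have "linear (frechet_derivative f (at x))" using d has_derivative_linear by blast
  then have "frechet_derivative f (at x) = (\<lambda>h. \<Sum>i\<in>UNIV. h$i * pd f i x)"
    by (auto simp: pd_def intro!: ext lin_expand)
  with d show ?thesis by simp
qed

lemma second_order_min:
  fixes f f' :: "real \<Rightarrow> real"
  assumes r: "r > 0" and mn: "\<forall>t. \<bar>t\<bar> < r \<longrightarrow> f 0 \<le> f t"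
    and d1: "\<forall>t. \<bar>t\<bar> < r \<longrightarrow> (f has_real_derivative f' t) (at t)"
    and d2: "(f' has_real_derivative c) (at 0)"
  shows "f' 0 = 0 \<and> c \<ge> 0"
proof -
  have z: "f' 0 = 0"
  proof -
    have "(f has_real_derivative f' 0) (at 0)" using d1 r by auto
    moreover have "\<forall>y. \<bar>0 - y\<bar> < r \<longrightarrow> f 0 \<le> f y" using mn by auto
    ultimately show ?thesis using DERIV_local_min r by blast
  qed
  have "c \<ge> 0"
  proof (rule ccontr)
    assume "\<not> c \<ge> 0" hence c: "c < 0" by simp
    have "((\<lambda>y. (f' y - f' 0) / (y - 0)) \<longlongrightarrow> c) (at 0)"
      using d2 has_field_derivative_iff by blast
    hence "((\<lambda>y. f' y / y) \<longlongrightarrow> c) (at_right 0)"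
      using z by (simp add: filterlim_at_split)
    hence "eventually (\<lambda>y. f' y / y < 0) (at_right 0)"
      using c by (simp add: order_tendstoD(2))
    then obtain e where e: "e > 0" "\<And>y. 0 < y \<Longrightarrow> y < e \<Longrightarrow> f' y / y < 0"
      unfolding eventually_at_right_field by auto
    define t where "t = min e r / 2"
    have t: "0 < t" "t < e" "t < r" using e r by (auto simp: t_def)
    obtain z where zz: "0 < z" "z < t" "f t - f 0 = (t - 0) * f' z"
      using MVT2[of 0 t f f'] t d1 by auto
    have "f' z / z < 0" using e zz t by auto
    hence "f' z < 0" using zz by (simp add: divide_less_0_iff)
    hence "t * f' z < 0" using t by (simp add: mult_pos_neg)
    hence "f t < f 0" using zz by simp
    moreover have "f 0 \<le> f t" using mn t by auto
    ultimately show False by simp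
  qed
  with z show ?thesis by simp
qed



definition bil :: "('n \<Rightarrow> 'n \<Rightarrow> real) \<Rightarrow> real^'n \<Rightarrow> real^'n \<Rightarrow> real" where
  "bil N x y = (\<Sum>j\<in>UNIV. \<Sum>m\<in>UNIV. x$j * y$m * N j m)"

lemma bil_diff_left: "bil N (x - y) z = bil N x z - bil N y z"
  by (simp add: bil_def algebra_simps sum_subtractf)
lemma bil_diff_right: "bil N z (x - y) = bil N z x - bil N z y"
  by (simp add: bil_def algebra_simps sum_subtractf)
lemma bil_scale_left: "bil N (c *\<^sub>R x) z = c * bil N x z"
  by (simp add: bil_def algebra_simps sum_distrib_left)
lemma bil_scale_right: "bil N z (c *\<^sub>R x) = c * bil N z x"
  by (simp add: bil_def algebra_simps sum_distrib_left)
lemma sum_delta_mult: "(\<Sum>m\<in>UNIV. (if m = l then 1 else 0) * (f m::real)) = f (l::'a::finite)"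
proof -
  have "\<And>m. (if m = l then 1 else 0) * f m = (if m = l then f m else 0)" by simp
  then show ?thesis by simp
qed

lemma bil_axis: "bil N (axis i 1) (axis l 1) = N i l"
proof -
  have "\<And>j. (\<Sum>m\<in>UNIV. axis i (1::real) $ j * axis l (1::real) $ m * N j m) = (if j = i then N j l else 0)"
    by (simp add: axis_def sum_delta_mult)
  then show ?thesis unfolding bil_def by simp
qed

lemma bil_pair: "bil N (c *\<^sub>R axis i 1 - d *\<^sub>R axis l 1) (c *\<^sub>R axis i 1 - d *\<^sub>R axis l 1)
   = c*c * N i i - c*d * N i l - d*c * N l i + d*d * N l l"
  by (simp add: bil_diff_left bil_diff_right bil_scale_left bil_scale_right bil_axis algebra_simps)

lemma bil_ident:
  "(\<Sum>i\<in>UNIV. \<Sum>l\<in>UNIV. bil N (p$l *\<^sub>R axis i 1 - p$i *\<^sub>R axis l 1) (p$l *\<^sub>R axis i 1 - p$i *\<^sub>R axis l 1))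
   = 2 * (\<Sum>l\<in>UNIV. p$l * p$l) * (\<Sum>i\<in>UNIV. N i i) - 2 * bil N p p"
proof -
  have "(\<Sum>i\<in>UNIV. \<Sum>l\<in>UNIV. bil N (p$l *\<^sub>R axis i 1 - p$i *\<^sub>R axis l 1) (p$l *\<^sub>R axis i 1 - p$i *\<^sub>R axis l 1))
    = (\<Sum>i\<in>UNIV. \<Sum>l\<in>UNIV. p$l*p$l * N i i - p$l*p$i * N i l - p$i*p$l * N l i + p$i*p$i * N l l)"
    by (simp add: bil_pair)
  also have "\<dots> = (\<Sum>i\<in>UNIV. \<Sum>l\<in>UNIV. p$l*p$l * N i i) - (\<Sum>i\<in>UNIV. \<Sum>l\<in>UNIV. p$l*p$i * N i l)
     - (\<Sum>i\<in>UNIV. \<Sum>l\<in>UNIV. p$i*p$l * N l i) + (\<Sum>i\<in>UNIV. \<Sum>l\<in>UNIV. p$i*p$i * N l l)"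
    by (simp add: sum.distrib sum_subtractf)
  also have "(\<Sum>i\<in>UNIV. \<Sum>l\<in>UNIV. p$i*p$l * N l i) = bil N p p"
    unfolding bil_def by (subst sum.swap) (simp add: mult_ac)
  also have "(\<Sum>i\<in>UNIV. \<Sum>l\<in>UNIV. p$l*p$i * N i l) = bil N p p"
    unfolding bil_def by (simp add: mult_ac)
  also have "(\<Sum>i\<in>UNIV. \<Sum>l\<in>UNIV. p$l*p$l * N i i) = (\<Sum>l\<in>UNIV. p$l * p$l) * (\<Sum>i\<in>UNIV. N i i)"
    by (subst sum.swap) (simp add: sum_distrib_left sum_distrib_right mult_ac)
  also have "(\<Sum>i\<in>UNIV. \<Sum>l\<in>UNIV. p$i*p$i * N l l) = (\<Sum>l\<in>UNIV. p$l * p$l) * (\<Sum>i\<in>UNIV. N i i)"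
    by (simp add: sum_distrib_left sum_distrib_right mult_ac)
  finally show ?thesis by simp
qed



lemma dir1:
  fixes f :: "real^'n \<Rightarrow> real"
  assumes "f differentiable (at (x + t *\<^sub>R v))"
  shows "((\<lambda>s. f (x + s *\<^sub>R v)) has_real_derivative (\<Sum>j\<in>UNIV. v$j * pd f j (x + t *\<^sub>R v))) (at t)"
proof -
  have l: "((\<lambda>s. x + s *\<^sub>R v) has_derivative (\<lambda>h. h *\<^sub>R v)) (at t)"
    by (auto intro!: derivative_eq_intros)
  have "((\<lambda>s. f (x + s *\<^sub>R v)) has_derivative ((\<lambda>h. \<Sum>i\<in>UNIV. h$i * pd f i (x + t *\<^sub>R v)) \<circ> (\<lambda>h. h *\<^sub>R v))) (at t)"
    using diff_chain_at[OF l pd_deriv[OF assms]] by (simp add: o_def)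
  moreover have "((\<lambda>h. \<Sum>i\<in>UNIV. h$i * pd f i (x + t *\<^sub>R v)) \<circ> (\<lambda>h. h *\<^sub>R v))
     = (\<lambda>h. h * (\<Sum>j\<in>UNIV. v$j * pd f j (x + t *\<^sub>R v)))"
    by (auto simp: o_def sum_distrib_left mult_ac intro!: ext)
  ultimately show ?thesis by (simp add: has_field_derivative_def mult_commute_abs)
qed

lemma dir2:
  fixes u :: "real^'n \<Rightarrow> real"
  assumes "\<forall>j. pd u j differentiable (at x)"
  shows "((\<lambda>s. \<Sum>j\<in>UNIV. v$j * pd u j (x + s *\<^sub>R v)) has_real_derivative
           (\<Sum>j\<in>UNIV. v$j * (\<Sum>i\<in>UNIV. v$i * pd (pd u j) i x))) (at 0)"
proof -
  have "\<And>j. ((\<lambda>s. pd u j (x + s *\<^sub>R v)) has_real_derivative (\<Sum>i\<in>UNIV. v$i * pd (pd u j) i x)) (at 0)"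
    using dir1[of "pd u j" x 0 v for j] assms by simp
  then show ?thesis
    by (auto intro!: DERIV_sum DERIV_cmult)
qed



lemma norm_grad_sq: "(norm (grad u y))\<^sup>2 = (\<Sum>j\<in>UNIV. (pd u j y)\<^sup>2)"
proof -
  have "(norm (grad u y))\<^sup>2 = inner (grad u y) (grad u y)" by (simp add: dot_square_norm)
  also have "\<dots> = (\<Sum>j\<in>UNIV. (pd u j y)\<^sup>2)" by (simp add: inner_vec_def grad_def power2_eq_square)
  finally show ?thesis .
qed

lemma lin_axis: "(\<Sum>k\<in>UNIV. axis i (1::real) $ k * (f k::real)) = f i"
  using sum_delta_mult[of i f] by (simp add: axis_def)

lemma divg_formula:
  fixes u :: "real^'n \<Rightarrow> real"
  assumes d: "\<forall>j. pd u j differentiable (at x)"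
    and psi: "(\<psi> has_real_derivative \<psi>') (at ((norm (grad u x))\<^sup>2))"
  shows "divg (\<lambda>y. \<psi> ((norm (grad u y))\<^sup>2) *\<^sub>R grad u y) x =
     \<psi>' * (\<Sum>i\<in>UNIV. \<Sum>j\<in>UNIV. 2 * pd u j x * pd (pd u j) i x * pd u i x)
     + \<psi> ((norm (grad u x))\<^sup>2) * (\<Sum>i\<in>UNIV. pd (pd u i) i x)"
proof -
  define S where "S y = (\<Sum>j\<in>UNIV. (pd u j y)\<^sup>2)" for y
  define D where "D j h = (\<Sum>k\<in>UNIV. h$k * pd (pd u j) k x)" for j h
  have Dj: "(pd u j has_derivative D j) (at x)" for j
    unfolding D_def by (rule pd_deriv) (use d in auto)
  have DS: "(S has_derivative (\<lambda>h. \<Sum>j\<in>UNIV. 2 * pd u j x * D j h)) (at x)"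
    unfolding S_def power2_eq_square
    by (rule derivative_eq_intros Dj refl | simp add: mult_ac)+
  have psi': "(\<psi> has_real_derivative \<psi>') (at (S x))"
    using psi by (simp add: S_def norm_grad_sq)
  have comp: "((\<lambda>y. \<psi> (S y)) has_derivative (\<lambda>h. (\<Sum>j\<in>UNIV. 2 * pd u j x * D j h) * \<psi>')) (at x)"
    by (rule DERIV_compose_FDERIV[OF psi' DS])
  have Fi: "((\<lambda>y. \<psi> (S y) * pd u i y) has_derivative
      (\<lambda>h. \<psi> (S x) * D i h + (\<Sum>j\<in>UNIV. 2 * pd u j x * D j h) * \<psi>' * pd u i x)) (at x)" for i
    using has_derivative_mult[OF comp Dj[of i]] by simp
  have pdi: "pd (\<lambda>y. (\<psi> ((norm (grad u y))\<^sup>2) *\<^sub>R grad u y) $ i) i x =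
      \<psi> (S x) * pd (pd u i) i x + (\<Sum>j\<in>UNIV. 2 * pd u j x * pd (pd u j) i x) * \<psi>' * pd u i x" for i
  proof -
    have e: "(\<lambda>y. (\<psi> ((norm (grad u y))\<^sup>2) *\<^sub>R grad u y) $ i) = (\<lambda>y. \<psi> (S y) * pd u i y)"
      by (simp only: norm_grad_sq S_def) (simp add: grad_def)
    have "pd (\<lambda>y. \<psi> (S y) * pd u i y) i x = (\<lambda>h. \<psi> (S x) * D i h + (\<Sum>j\<in>UNIV. 2 * pd u j x * D j h) * \<psi>' * pd u i x) (axis i 1)"
      unfolding pd_def[of "\<lambda>y. \<psi> (S y) * pd u i y"] frechet_derivative_at[OF Fi[of i], symmetric] ..
    then show ?thesis
      unfolding e by (simp add: D_def lin_axis)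
  qed
  show ?thesis
    unfolding divg_def pdi
    by (simp add: S_def norm_grad_sq sum.distrib sum_distrib_left sum_distrib_right mult_ac)
qed



lemma bil_shift:
  "bil (\<lambda>j m. N0 j m - k * a$j * a$m) v v = bil N0 v v - k * (a \<bullet> v)\<^sup>2"
proof -
  have "(a \<bullet> v)\<^sup>2 = (\<Sum>j\<in>UNIV. \<Sum>m\<in>UNIV. v$j * v$m * (a$j * a$m))"
    by (simp add: inner_vec_def power2_eq_square sum_product mult_ac)
  then show ?thesis
    by (simp add: bil_def algebra_simps sum_subtractf sum_distrib_left)
qed

lemma trace_nonneg:
  assumes "\<forall>v. bil N v v \<ge> 0"
  shows "(\<Sum>i\<in>UNIV. N i i) \<ge> 0"
proof -
  have "\<And>i. N i i = bil N (axis i 1) (axis i 1)" by (simp add: bil_axis)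
  then show ?thesis using assms by (simp add: sum_nonneg)
qed

lemma trace_ge_form:
  assumes "\<forall>v. bil N v v \<ge> 0"
  shows "bil N p p \<le> (\<Sum>l\<in>UNIV. p$l * p$l) * (\<Sum>i\<in>UNIV. N i i)"
proof -
  have "0 \<le> (\<Sum>i\<in>UNIV. \<Sum>l\<in>UNIV. bil N (p$l *\<^sub>R axis i 1 - p$i *\<^sub>R axis l 1) (p$l *\<^sub>R axis i 1 - p$i *\<^sub>R axis l 1))"
    using assms by (simp add: sum_nonneg)
  then show ?thesis using bil_ident[of N p] by simp
qed

lemma final_alg:
  fixes N0 :: "'n::finite \<Rightarrow> 'n \<Rightarrow> real"
  assumes pos: "\<forall>v. bil N0 v v \<ge> k * (a \<bullet> v)\<^sup>2" and a: "norm a = 1" and p: "p = \<sigma> *\<^sub>R a"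
    and k: "k > 1"
    and eq: "((1 + S) * (\<Sum>i\<in>UNIV. N0 i i) - bil N0 p p = 1) \<or>
             (S < 1 \<and> (1 - S) * (\<Sum>i\<in>UNIV. N0 i i) + bil N0 p p = 1)"
    and S: "S = (\<Sum>l\<in>UNIV. p$l * p$l)"
  shows False
proof -
  define N where "N j m = N0 j m - k * a$j * a$m" for j m
  have Nv: "bil N v v = bil N0 v v - k * (a \<bullet> v)\<^sup>2" for v
    unfolding N_def[abs_def] by (rule bil_shift)
  have Npos: "\<forall>v. bil N v v \<ge> 0" using pos Nv by auto
  have aa: "a \<bullet> a = 1" using a by (simp add: dot_square_norm)
  have aa': "(\<Sum>i\<in>UNIV. a$i * a$i) = 1" using aa by (simp add: inner_vec_def)
  have tr: "(\<Sum>i\<in>UNIV. N0 i i) = (\<Sum>i\<in>UNIV. N i i) + k"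
    using aa' by (simp add: N_def sum_subtractf mult.assoc flip: sum_distrib_left)
  have ap: "(a \<bullet> p)\<^sup>2 = \<sigma>\<^sup>2" using aa p by (simp add: power2_eq_square)
  have Sp: "S = \<sigma>\<^sup>2"
  proof -
    have "S = (\<Sum>l\<in>UNIV. (\<sigma> * \<sigma>) * (a$l * a$l))" using S p by (simp add: mult_ac)
    also have "\<dots> = \<sigma> * \<sigma>" using aa' by (simp flip: sum_distrib_left)
    finally show ?thesis by (simp add: power2_eq_square)
  qed
  have bp: "bil N0 p p = bil N p p + k * \<sigma>\<^sup>2" using Nv[of p] ap by simp
  have t0: "(\<Sum>i\<in>UNIV. N i i) \<ge> 0" using Npos by (rule trace_nonneg)
  have t1: "bil N p p \<le> S * (\<Sum>i\<in>UNIV. N i i)" using trace_ge_form[OF Npos, of p] S by simp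
  have t2: "bil N p p \<ge> 0" using Npos by auto
  from eq show False
  proof
    assume e: "(1 + S) * (\<Sum>i\<in>UNIV. N0 i i) - bil N0 p p = 1"
    have "1 = k + (\<Sum>i\<in>UNIV. N i i) + (S * (\<Sum>i\<in>UNIV. N i i) - bil N p p)"
      using e unfolding tr bp Sp by (simp add: algebra_simps)
    thus False using t0 t1 k by linarith
  next
    assume e: "S < 1 \<and> (1 - S) * (\<Sum>i\<in>UNIV. N0 i i) + bil N0 p p = 1"
    have "1 = k + (1 - S) * (\<Sum>i\<in>UNIV. N i i) + bil N p p"
      using e unfolding tr bp Sp by (simp add: algebra_simps)
    moreover have "(1 - S) * (\<Sum>i\<in>UNIV. N i i) \<ge> 0" using e t0 by simp
    ultimately show False using t2 k by linarith
  qed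
qed



lemma T_bil: "(\<Sum>i\<in>UNIV. \<Sum>j\<in>UNIV. 2 * pd u j x * pd (pd u j) i x * pd u i x)
   = 2 * bil (\<lambda>j i. pd (pd u j) i x) (grad u x) (grad u x)"
  unfolding bil_def grad_def
  by (subst sum.swap) (simp add: sum_distrib_left mult_ac)

lemma S_grad: "(norm (grad u x))\<^sup>2 = (\<Sum>l\<in>UNIV. grad u x $ l * grad u x $ l)"
  by (simp only: norm_grad_sq) (simp add: grad_def power2_eq_square)

lemma powr32: "(t::real) \<ge> 0 \<Longrightarrow> t powr (3/2) = t * sqrt t"
proof -
  assume t: "t \<ge> 0"
  have h: "(3/2::real) = 1 + 1/2" by simp
  have "t powr (3/2) = t powr 1 * t powr (1/2)"
    unfolding h by (rule powr_add)
  also have "\<dots> = t * sqrt t" using t by (cases "t = 0") (simp_all add: powr_half_sqrt)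
  finally show ?thesis .
qed

lemma alg1: "(c::real) > 0 \<Longrightarrow> s > 0 \<Longrightarrow> a / (2 * c * s) * (2 * B) + 1 / s * tr = 1 / (c * s) \<Longrightarrow> a * B + c * tr = 1"
  by (simp add: field_simps)

lemma eqE:
  fixes u :: "real^'n \<Rightarrow> real"
  assumes d: "\<forall>j. pd u j differentiable (at x)"
    and e: "divg (\<lambda>y. (1 / sqrt (1 + (norm (grad u y))\<^sup>2)) *\<^sub>R grad u y) x
                   = 1 / (1 + (norm (grad u x))\<^sup>2) powr (3/2)"
  shows "(1 + (\<Sum>l\<in>UNIV. grad u x $ l * grad u x $ l)) * (\<Sum>i\<in>UNIV. pd (pd u i) i x)
          - bil (\<lambda>j i. pd (pd u j) i x) (grad u x) (grad u x) = 1"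
proof -
  define \<rho> where "\<rho> = (norm (grad u x))\<^sup>2"
  define B where "B = bil (\<lambda>j i. pd (pd u j) i x) (grad u x) (grad u x)"
  define tr where "tr = (\<Sum>i\<in>UNIV. pd (pd u i) i x)"
  have r0: "\<rho> \<ge> 0" by (simp add: \<rho>_def)
  have s0: "sqrt (1 + \<rho>) > 0" using r0 by simp
  have der: "((\<lambda>t. 1 / sqrt (1 + t)) has_real_derivative (- 1 / (2 * (1 + \<rho>) * sqrt (1 + \<rho>)))) (at \<rho>)"
    using r0 s0
    by (auto intro!: derivative_eq_intros simp: field_simps power2_eq_square)
  have "divg (\<lambda>y. (1 / sqrt (1 + (norm (grad u y))\<^sup>2)) *\<^sub>R grad u y) x
     = (- 1 / (2 * (1 + \<rho>) * sqrt (1 + \<rho>))) * (2 * B) + (1 / sqrt (1 + \<rho>)) * tr"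
    using divg_formula[OF d der[unfolded \<rho>_def]] T_bil[of u x]
    by (simp add: \<rho>_def B_def tr_def)
  with e have "(- 1 / (2 * (1 + \<rho>) * sqrt (1 + \<rho>))) * (2 * B) + (1 / sqrt (1 + \<rho>)) * tr
      = 1 / ((1 + \<rho>) * sqrt (1 + \<rho>))"
    using powr32[of "1 + \<rho>"] r0 by (simp add: \<rho>_def)
  then have "(- 1) * B + (1 + \<rho>) * tr = 1"
    using r0 s0 by (intro alg1[of "1 + \<rho>" "sqrt (1 + \<rho>)"]) auto
  then show ?thesis using S_grad[of u x] by (simp add: \<rho>_def B_def tr_def)
qed

lemma eqL:
  fixes u :: "real^'n \<Rightarrow> real"
  assumes d: "\<forall>j. pd u j differentiable (at x)"
    and lt: "norm (grad u x) < 1"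
    and e: "divg (\<lambda>y. (1 / sqrt (1 - (norm (grad u y))\<^sup>2)) *\<^sub>R grad u y) x
                   = 1 / (1 - (norm (grad u x))\<^sup>2) powr (3/2)"
  shows "(\<Sum>l\<in>UNIV. grad u x $ l * grad u x $ l) < 1 \<and>
         (1 - (\<Sum>l\<in>UNIV. grad u x $ l * grad u x $ l)) * (\<Sum>i\<in>UNIV. pd (pd u i) i x)
          + bil (\<lambda>j i. pd (pd u j) i x) (grad u x) (grad u x) = 1"
proof -
  define \<rho> where "\<rho> = (norm (grad u x))\<^sup>2"
  define B where "B = bil (\<lambda>j i. pd (pd u j) i x) (grad u x) (grad u x)"
  define tr where "tr = (\<Sum>i\<in>UNIV. pd (pd u i) i x)"
  have r0: "\<rho> < 1" using lt unfolding \<rho>_def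
    by (simp add: abs_square_less_1)
  have s0: "sqrt (1 - \<rho>) > 0" using r0 by simp
  have der: "((\<lambda>t. 1 / sqrt (1 - t)) has_real_derivative (1 / (2 * (1 - \<rho>) * sqrt (1 - \<rho>)))) (at \<rho>)"
    using r0 s0
    by (auto intro!: derivative_eq_intros simp: field_simps power2_eq_square)
  have "divg (\<lambda>y. (1 / sqrt (1 - (norm (grad u y))\<^sup>2)) *\<^sub>R grad u y) x
     = (1 / (2 * (1 - \<rho>) * sqrt (1 - \<rho>))) * (2 * B) + (1 / sqrt (1 - \<rho>)) * tr"
    using divg_formula[OF d der[unfolded \<rho>_def]] T_bil[of u x]
    by (simp add: \<rho>_def B_def tr_def)
  with e have "(1 / (2 * (1 - \<rho>) * sqrt (1 - \<rho>))) * (2 * B) + (1 / sqrt (1 - \<rho>)) * tr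
      = 1 / ((1 - \<rho>) * sqrt (1 - \<rho>))"
    using powr32[of "1 - \<rho>"] r0 by (simp add: \<rho>_def)
  then have "1 * B + (1 - \<rho>) * tr = 1"
    using r0 s0 by (intro alg1[of "1 - \<rho>" "sqrt (1 - \<rho>)"]) auto
  then show ?thesis using S_grad[of u x] r0 by (simp add: \<rho>_def B_def tr_def)
qed



lemma touch:
  fixes u :: "real^'n \<Rightarrow> real"
  assumes diff: "\<forall>y\<in>ball x1 e. u differentiable (at y)" and d2: "\<forall>j. pd u j differentiable (at x1)"
    and e: "e > 0"
    and mn: "\<forall>y\<in>ball x1 e. u x1 - k*((a \<bullet> (z - x1))\<^sup>2/2 - D*(a \<bullet> (z - x1)))
                         \<le> u y - k*((a \<bullet> (z - y))\<^sup>2/2 - D*(a \<bullet> (z - y)))"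
  shows "(\<Sum>j\<in>UNIV. v$j * pd u j x1) = k*(a \<bullet> v)*(D - a \<bullet> (z - x1))
         \<and> bil (\<lambda>j i. pd (pd u j) i x1) v v \<ge> k*(a \<bullet> v)\<^sup>2"
proof -
  define \<alpha> where "\<alpha> = a \<bullet> v"
  define l1 where "l1 = a \<bullet> (z - x1)"
  define r where "r = e / (norm v + 1)"
  have r: "r > 0" using e by (simp add: r_def add_nonneg_pos)
  have inb: "x1 + t *\<^sub>R v \<in> ball x1 e" if "\<bar>t\<bar> < r" for t
  proof -
    have "\<bar>t\<bar> * norm v \<le> \<bar>t\<bar> * (norm v + 1)" by (simp add: mult_left_mono)
    also have "\<dots> < r * (norm v + 1)"
      using that by (intro mult_strict_right_mono) (auto simp: add_nonneg_pos)
    also have "\<dots> = e"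
    proof -
      have "norm v + 1 \<noteq> 0" using norm_ge_zero[of v] by linarith
      then show ?thesis by (simp add: r_def)
    qed
    finally show ?thesis by (simp add: dist_norm)
  qed
  have lin: "a \<bullet> (z - (x1 + t *\<^sub>R v)) = l1 - t * \<alpha>" for t
    by (simp add: l1_def \<alpha>_def inner_diff_right inner_add_right algebra_simps)
  define f where "f t = u (x1 + t *\<^sub>R v) - k*((l1 - t*\<alpha>)\<^sup>2/2 - D*(l1 - t*\<alpha>))" for t
  define f' where "f' t = (\<Sum>j\<in>UNIV. v$j * pd u j (x1 + t *\<^sub>R v)) - k*\<alpha>*(D - (l1 - t*\<alpha>))" for t
  have fmin: "\<forall>t. \<bar>t\<bar> < r \<longrightarrow> f 0 \<le> f t"
  proof (intro allI impI)
    fix t assume "\<bar>t\<bar> < r"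
    then have "u x1 - k*((a \<bullet> (z - x1))\<^sup>2/2 - D*(a \<bullet> (z - x1)))
        \<le> u (x1 + t *\<^sub>R v) - k*((a \<bullet> (z - (x1 + t *\<^sub>R v)))\<^sup>2/2 - D*(a \<bullet> (z - (x1 + t *\<^sub>R v))))"
      using mn inb by blast
    then show "f 0 \<le> f t" unfolding f_def lin by (simp add: l1_def)
  qed
  have fd: "\<forall>t. \<bar>t\<bar> < r \<longrightarrow> (f has_real_derivative f' t) (at t)"
  proof (intro allI impI)
    fix t assume "\<bar>t\<bar> < r"
    then have "u differentiable (at (x1 + t *\<^sub>R v))" using diff inb by blast
    from dir1[OF this] show "(f has_real_derivative f' t) (at t)"
      unfolding f_def[abs_def] f'_def
      by (auto intro!: derivative_eq_intros simp: algebra_simps power2_eq_square field_simps)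
  qed
  have f'd: "(f' has_real_derivative (bil (\<lambda>j i. pd (pd u j) i x1) v v - k*\<alpha>*\<alpha>)) (at 0)"
  proof -
    have b: "(\<Sum>j\<in>UNIV. v$j * (\<Sum>i\<in>UNIV. v$i * pd (pd u j) i x1)) = bil (\<lambda>j i. pd (pd u j) i x1) v v"
      by (simp add: bil_def sum_distrib_left mult_ac)
    have p: "((\<lambda>t. k*\<alpha>*(D - (l1 - t*\<alpha>))) has_real_derivative k*\<alpha>*\<alpha>) (at 0)"
      by (auto intro!: derivative_eq_intros)
    from DERIV_diff[OF dir2[OF d2, of v] p] show ?thesis
      unfolding f'_def[abs_def] b .

  qed
  from second_order_min[OF r fmin fd f'd] show ?thesis
    by (simp add: f'_def \<alpha>_def l1_def power2_eq_square)
qed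



lemma compl_nonempty:
  fixes \<Omega> :: "(real^'n) set"
  assumes "bounded \<Omega>" shows "- \<Omega> \<noteq> {}"
proof
  assume "- \<Omega> = {}"
  then have "\<Omega> = UNIV" by auto
  then show False using assms not_bounded_UNIV by auto
qed

lemma support:
  fixes \<Omega> :: "(real^'n) set"
  assumes op: "open \<Omega>" and cv: "convex \<Omega>" and bd: "bounded \<Omega>" and x1: "x1 \<in> \<Omega>"
  shows "\<exists>a z. norm a = 1 \<and> infdist x1 (-\<Omega>) = a \<bullet> (z - x1) \<and> (\<forall>y\<in>\<Omega>. infdist y (-\<Omega>) \<le> a \<bullet> (z - y))"
proof -
  have cl: "closed (-\<Omega>)" using op by (simp add: closed_Compl)
  obtain z where z: "z \<in> -\<Omega>" "infdist x1 (-\<Omega>) = dist x1 z"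
    using infdist_attains_inf[OF cl compl_nonempty[OF bd]] by blast
  have "convex ((+) (-z) ` \<Omega>)" using cv by (rule convex_translation)
  moreover have "0 \<notin> (+) (-z) ` \<Omega>" using z by auto
  ultimately obtain b where b: "b \<noteq> 0" "\<forall>x\<in>(+) (-z) ` \<Omega>. 0 \<le> inner b x"
    using separating_hyperplane_set_0 by blast
  define a where "a = - (1 / norm b) *\<^sub>R b"
  have na: "norm a = 1" using b by (simp add: a_def)
  have le: "a \<bullet> (z - y) \<ge> 0" if "y \<in> \<Omega>" for y
  proof -
    have "0 \<le> b \<bullet> (-z + y)" using b that by auto
    then show ?thesis using b by (simp add: a_def inner_diff_right algebra_simps divide_simps)
  qed
  have lt: "a \<bullet> (z - y) > 0" if y: "y \<in> \<Omega>" for y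
  proof (rule ccontr)
    assume "\<not> a \<bullet> (z - y) > 0"
    then have 0: "a \<bullet> (z - y) = 0" using le[OF y] by simp
    obtain e where e: "e > 0" "ball y e \<subseteq> \<Omega>" using op y open_contains_ball by blast
    have "y + (e/2) *\<^sub>R a \<in> ball y e" using e na by (simp add: dist_norm)
    then have "y + (e/2) *\<^sub>R a \<in> \<Omega>" using e by blast
    from le[OF this] have "0 \<le> a \<bullet> (z - y) - (e/2) * (a \<bullet> a)"
      by (simp add: inner_diff_right inner_add_right algebra_simps)
    moreover have "a \<bullet> a = 1" using na by (simp add: dot_square_norm)
    ultimately show False using 0 e by simp
  qed
  have main: "infdist y (-\<Omega>) \<le> a \<bullet> (z - y)" if y: "y \<in> \<Omega>" for y
  proof -
    define q where "q = y + (a \<bullet> (z - y)) *\<^sub>R a"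
    have aa: "a \<bullet> a = 1" using na by (simp add: dot_square_norm)
    have "a \<bullet> (z - q) = 0" using aa by (simp add: q_def inner_diff_right inner_add_right)
    then have "q \<in> -\<Omega>" using lt by force
    then have "infdist y (-\<Omega>) \<le> dist y q" by (rule infdist_le)
    also have "\<dots> = a \<bullet> (z - y)" using lt[OF y] na by (simp add: q_def dist_norm)
    finally show ?thesis .
  qed
  have "a \<bullet> (z - x1) \<le> norm a * norm (z - x1)" by (rule norm_cauchy_schwarz)
  then have "a \<bullet> (z - x1) \<le> infdist x1 (-\<Omega>)" using z na by (simp add: dist_norm norm_minus_commute)
  then have "infdist x1 (-\<Omega>) = a \<bullet> (z - x1)" using main[OF x1] by simp
  with na main show ?thesis by blast
qed

lemma delta_inradius:
  fixes \<Omega> :: "(real^'n) set"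
  assumes op: "open \<Omega>" and bd: "bounded \<Omega>" and x: "x \<in> \<Omega>"
  shows "0 < infdist x (-\<Omega>) \<and> infdist x (-\<Omega>) \<le> inradius \<Omega>"
proof -
  have cl: "closed (-\<Omega>)" using op by (simp add: closed_Compl)
  have pos: "infdist x (-\<Omega>) > 0"
    using infdist_pos_not_in_closed[OF cl compl_nonempty[OF bd]] x by simp
  have ball: "ball x (infdist x (-\<Omega>)) \<subseteq> \<Omega>"
  proof
    fix y assume y: "y \<in> ball x (infdist x (-\<Omega>))"
    show "y \<in> \<Omega>"
    proof (rule ccontr)
      assume "y \<notin> \<Omega>"
      then have "infdist x (-\<Omega>) \<le> dist x y" by (intro infdist_le) simp
      then show False using y by simp
    qed
  qed
  have bdd: "bdd_above {r. r > 0 \<and> (\<exists>x. ball x r \<subseteq> \<Omega>)}"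
  proof (rule bdd_aboveI[of _ "diameter \<Omega>"])
    fix r assume "r \<in> {r. r > 0 \<and> (\<exists>x. ball x r \<subseteq> \<Omega>)}"
    then obtain c where r: "r > 0" "ball c r \<subseteq> \<Omega>" by auto
    have "diameter (ball c r) \<le> diameter \<Omega>" by (rule diameter_subset[OF r(2) bd])
    then show "r \<le> diameter \<Omega>" using r by simp
  qed
  have "infdist x (-\<Omega>) \<le> inradius \<Omega>"
    unfolding inradius_def using pos ball by (intro cSup_upper[OF _ bdd]) auto
  with pos show ?thesis by simp
qed



lemma g_mono:
  fixes k D s t :: real
  assumes "k > 0" "t \<le> s" "s \<le> D" "0 \<le> t"
  shows "k * (s * s / 2 - D * s) \<le> k * (t * t / 2 - D * t)"
proof -
  have "s * s / 2 - D * s - (t * t / 2 - D * t) = (s - t) * ((s + t)/2 - D)"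
    by (simp add: algebra_simps field_simps)
  also have "\<dots> \<le> 0" using assms by (intro mult_nonneg_nonpos) auto
  finally show ?thesis using assms(1) by (simp add: mult_left_mono)
qed

lemma compare:
  fixes \<Omega> :: "(real^'n) set" and u :: "real^'n \<Rightarrow> real"
  assumes op: "open \<Omega>" and cv: "convex \<Omega>" and bd: "bounded \<Omega>"
    and C2: "C2_on \<Omega> u" and cont: "continuous_on (closure \<Omega>) u"
    and bdry: "\<forall>x\<in>frontier \<Omega>. u x = 0"
    and eq: "(\<forall>x\<in>\<Omega>. divg (\<lambda>y. (1 / sqrt (1 + (norm (grad u y))\<^sup>2)) *\<^sub>R grad u y) x
                   = 1 / (1 + (norm (grad u x))\<^sup>2) powr (3/2))
         \<or> (\<forall>x\<in>\<Omega>. norm (grad u x) < 1 \<and>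
                   divg (\<lambda>y. (1 / sqrt (1 - (norm (grad u y))\<^sup>2)) *\<^sub>R grad u y) x
                   = 1 / (1 - (norm (grad u x))\<^sup>2) powr (3/2))"
    and k: "k > 1" and D: "D > inradius \<Omega>" and x: "x \<in> \<Omega>"
  shows "u x \<ge> k*((infdist x (-\<Omega>))\<^sup>2/2 - D*infdist x (-\<Omega>))"
proof (rule ccontr)
  define \<delta> where "\<delta> y = infdist y (-\<Omega>)" for y
  define g where "g t = k*(t\<^sup>2/2 - D*t)" for t
  define \<phi> where "\<phi> y = u y - g (\<delta> y)" for y
  assume "\<not> ?thesis"
  then have neg: "\<phi> x < 0" by (simp add: \<phi>_def g_def \<delta>_def)
  have diff: "\<forall>y\<in>\<Omega>. u differentiable (at y)" and d2: "\<forall>j. \<forall>y\<in>\<Omega>. pd u j differentiable (at y)"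
    using C2 by (auto simp: C2_on_def)
  have cphi: "continuous_on (closure \<Omega>) \<phi>"
    unfolding \<phi>_def g_def \<delta>_def
    by (intro continuous_intros cont continuous_on_id) auto
  have "closure \<Omega> \<noteq> {}" using x closure_subset by blast
  then obtain x1 where x1: "x1 \<in> closure \<Omega>" "\<forall>y\<in>closure \<Omega>. \<phi> x1 \<le> \<phi> y"
    using continuous_attains_inf[OF _ _ cphi] bd by auto
  have xc: "x \<in> closure \<Omega>" using x closure_subset by blast
  have "\<phi> x1 \<le> \<phi> x" using x1(2) xc by blast
  then have neg1: "\<phi> x1 < 0" using neg by linarith
  have x1O: "x1 \<in> \<Omega>"
  proof (rule ccontr)
    assume n: "x1 \<notin> \<Omega>"
    then have "x1 \<in> frontier \<Omega>" using x1 op by (simp add: frontier_def interior_open)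
    then have "u x1 = 0" using bdry by auto
    moreover have "\<delta> x1 = 0" using n by (simp add: \<delta>_def)
    ultimately have "\<phi> x1 = 0" by (simp add: \<phi>_def g_def)
    then show False using neg1 by simp
  qed
  obtain a z where az: "norm a = 1" "\<delta> x1 = a \<bullet> (z - x1)" "\<forall>y\<in>\<Omega>. \<delta> y \<le> a \<bullet> (z - y)"
    using support[OF op cv bd x1O] unfolding \<delta>_def by blast
  have dl: "0 < \<delta> y \<and> \<delta> y \<le> inradius \<Omega>" if "y \<in> \<Omega>" for y
    using delta_inradius[OF op bd that] by (simp add: \<delta>_def)
  obtain e0 where e0: "e0 > 0" "ball x1 e0 \<subseteq> \<Omega>" using op x1O open_contains_ball by blast
  define e where "e = min e0 (D - \<delta> x1)"
  have e: "e > 0" using e0 dl[OF x1O] D by (simp add: e_def)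
  have eb: "ball x1 e \<subseteq> \<Omega>" using e0 by (auto simp: e_def)
  have mn: "\<forall>y\<in>ball x1 e. u x1 - k*((a \<bullet> (z - x1))\<^sup>2/2 - D*(a \<bullet> (z - x1)))
                         \<le> u y - k*((a \<bullet> (z - y))\<^sup>2/2 - D*(a \<bullet> (z - y)))"
  proof
    fix y assume y: "y \<in> ball x1 e"
    have yO: "y \<in> \<Omega>" using y eb by blast
    have "a \<bullet> (z - y) = a \<bullet> (z - x1) + a \<bullet> (x1 - y)" by (simp add: inner_diff_right)
    also have "a \<bullet> (x1 - y) \<le> norm a * norm (x1 - y)" by (rule norm_cauchy_schwarz)
    then have "a \<bullet> (x1 - y) < e" using y az(1) by (simp add: dist_norm)
    finally have "a \<bullet> (z - y) < \<delta> x1 + e" using az(2) by simp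
    then have lD: "a \<bullet> (z - y) \<le> D" by (simp add: e_def)
    have "g (a \<bullet> (z - y)) \<le> g (\<delta> y)"
      unfolding g_def power2_eq_square using k lD az(3) yO dl[OF yO] by (intro g_mono) auto
    moreover have "\<phi> x1 \<le> \<phi> y" using x1 yO closure_subset by blast
    ultimately show "u x1 - k*((a \<bullet> (z - x1))\<^sup>2/2 - D*(a \<bullet> (z - x1)))
                         \<le> u y - k*((a \<bullet> (z - y))\<^sup>2/2 - D*(a \<bullet> (z - y)))"
      using az(2) by (simp add: \<phi>_def g_def)
  qed
  have T: "(\<Sum>j\<in>UNIV. v$j * pd u j x1) = k*(a \<bullet> v)*(D - a \<bullet> (z - x1))
         \<and> bil (\<lambda>j i. pd (pd u j) i x1) v v \<ge> k*(a \<bullet> v)\<^sup>2" for v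
  proof -
    have bx: "\<forall>y\<in>ball x1 e. u differentiable (at y)" using diff eb by blast
    have dd: "\<forall>j. pd u j differentiable (at x1)" using d2 x1O by blast
    show ?thesis by (rule touch[OF bx dd e mn])
  qed
  define \<sigma> where "\<sigma> = k * (D - a \<bullet> (z - x1))"
  have p: "grad u x1 = \<sigma> *\<^sub>R a"
  proof (subst vec_eq_iff, intro allI)
    fix i
    have "(\<Sum>j\<in>UNIV. axis i (1::real) $ j * pd u j x1) = k*(a \<bullet> axis i 1)*(D - a \<bullet> (z - x1))"
      using T[of "axis i 1"] by blast
    then show "grad u x1 $ i = (\<sigma> *\<^sub>R a) $ i"
      by (simp add: lin_axis grad_def \<sigma>_def inner_axis)
  qed
  have eq1: "((1 + (\<Sum>l\<in>UNIV. grad u x1 $ l * grad u x1 $ l)) * (\<Sum>i\<in>UNIV. pd (pd u i) i x1)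
          - bil (\<lambda>j i. pd (pd u j) i x1) (grad u x1) (grad u x1) = 1) \<or>
         ((\<Sum>l\<in>UNIV. grad u x1 $ l * grad u x1 $ l) < 1 \<and>
         (1 - (\<Sum>l\<in>UNIV. grad u x1 $ l * grad u x1 $ l)) * (\<Sum>i\<in>UNIV. pd (pd u i) i x1)
          + bil (\<lambda>j i. pd (pd u j) i x1) (grad u x1) (grad u x1) = 1)"
  proof -
    have dd: "\<forall>j. pd u j differentiable (at x1)" using d2 x1O by blast
    from eq show ?thesis
    proof
      assume "\<forall>x\<in>\<Omega>. divg (\<lambda>y. (1 / sqrt (1 + (norm (grad u y))\<^sup>2)) *\<^sub>R grad u y) x
                   = 1 / (1 + (norm (grad u x))\<^sup>2) powr (3/2)"
      then show ?thesis using eqE[OF dd] x1O by blast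
    next
      assume "\<forall>x\<in>\<Omega>. norm (grad u x) < 1 \<and>
                   divg (\<lambda>y. (1 / sqrt (1 - (norm (grad u y))\<^sup>2)) *\<^sub>R grad u y) x
                   = 1 / (1 - (norm (grad u x))\<^sup>2) powr (3/2)"
      then show ?thesis using eqL[OF dd] x1O by blast
    qed
  qed
  have pos: "\<forall>v. bil (\<lambda>j i. pd (pd u j) i x1) v v \<ge> k*(a \<bullet> v)\<^sup>2" using T by blast
  show False by (rule final_alg[OF pos az(1) p k eq1 refl])
qed



theorem theorem5p1:
  fixes \<Omega> :: "(real^'n) set" and u :: "real^'n \<Rightarrow> real"
  assumes "CARD('n) \<ge> 2"
    and "open \<Omega>" and "connected \<Omega>" and "\<Omega> \<noteq> {}" and "bounded \<Omega>"
    and "smooth_boundary \<Omega>" and "strictly_convex_domain \<Omega>"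
    and "C2_on \<Omega> u" and "continuous_on (closure \<Omega>) u"
    and "\<forall>x\<in>frontier \<Omega>. u x = 0"
    and "(\<forall>x\<in>\<Omega>. divg (\<lambda>y. (1 / sqrt (1 + (norm (grad u y))\<^sup>2)) *\<^sub>R grad u y) x
                   = 1 / (1 + (norm (grad u x))\<^sup>2) powr (3/2))
         \<or> (\<forall>x\<in>\<Omega>. norm (grad u x) < 1 \<and>
                   divg (\<lambda>y. (1 / sqrt (1 - (norm (grad u y))\<^sup>2)) *\<^sub>R grad u y) x
                   = 1 / (1 - (norm (grad u x))\<^sup>2) powr (3/2))"
  shows "- Inf (u ` closure \<Omega>) \<le> (inradius \<Omega>)\<^sup>2 / 2"
proof -
  note op = assms(2) and bd = assms(5) and C2 = assms(8) and cont = assms(9)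
    and bdry = assms(10) and eq = assms(11)
  have cv: "convex \<Omega>" using assms(7) by (simp add: strictly_convex_domain_def)
  define d where "d = inradius \<Omega>"
  obtain x0 where x0: "x0 \<in> \<Omega>" using assms(4) by blast
  have d0: "d \<ge> 0" using delta_inradius[OF op bd x0] by (simp add: d_def)
  have inner_bound: "- u x \<le> d\<^sup>2 / 2" if x: "x \<in> \<Omega>" for x
  proof -
    define \<delta> where "\<delta> = infdist x (-\<Omega>)"
    have dx: "0 < \<delta>" "\<delta> \<le> d" using delta_inradius[OF op bd x] by (simp_all add: d_def \<delta>_def)
    have ev: "- u x \<le> (1 + \<epsilon>) * (d * d / 2 + \<epsilon> * d)" if e: "\<epsilon> > 0" for \<epsilon>
    proof -
      have k: "1 + \<epsilon> > 1" using e by simp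
      have D: "d + \<epsilon> > inradius \<Omega>" using e by (simp add: d_def)
      have "u x \<ge> (1 + \<epsilon>) * (\<delta> * \<delta> / 2 - (d + \<epsilon>) * \<delta>)"
        using compare[OF op cv bd C2 cont bdry eq k D x] by (simp add: \<delta>_def power2_eq_square)
      moreover have "(1 + \<epsilon>) * (d * d / 2 - (d + \<epsilon>) * d) \<le> (1 + \<epsilon>) * (\<delta> * \<delta> / 2 - (d + \<epsilon>) * \<delta>)"
        using e dx by (intro g_mono) auto
      moreover have "(1 + \<epsilon>) * (d * d / 2 - (d + \<epsilon>) * d) = - ((1 + \<epsilon>) * (d * d / 2 + \<epsilon> * d))"
        by (simp add: algebra_simps)
      ultimately show ?thesis by linarith
    qed
    have lim: "((\<lambda>\<epsilon>. (1 + \<epsilon>) * (d * d / 2 + \<epsilon> * d)) \<longlongrightarrow> (1 + 0) * (d * d / 2 + 0 * d)) (at_right 0)"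
      by (intro tendsto_intros)
    have "- u x \<le> (1 + 0) * (d * d / 2 + 0 * d)"
    proof (rule tendsto_lowerbound[OF lim])
      show "\<forall>\<^sub>F \<epsilon> in at_right 0. - u x \<le> (1 + \<epsilon>) * (d * d / 2 + \<epsilon> * d)"
        using ev by (auto simp: eventually_at_right_field intro: exI[of _ 1])
    qed simp
    then show ?thesis by (simp add: power2_eq_square)
  qed
  have "- (d\<^sup>2 / 2) \<le> Inf (u ` closure \<Omega>)"
  proof (rule cInf_greatest)
    show "u ` closure \<Omega> \<noteq> {}" using x0 closure_subset by blast
  next
    fix t assume "t \<in> u ` closure \<Omega>"
    then obtain y where y: "y \<in> closure \<Omega>" "t = u y" by blast
    show "- (d\<^sup>2 / 2) \<le> t"
    proof (cases "y \<in> \<Omega>")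
      case True
      then show ?thesis using inner_bound[OF True] y by simp
    next
      case False
      then have "y \<in> frontier \<Omega>" using y op by (simp add: frontier_def interior_open)
      then have "u y = 0" using bdry by blast
      then show ?thesis using y by simp
    qed
  qed
  then show ?thesis by (simp add: d_def)
qed

end
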